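(* Let $\eta>0$, $C>0$, $\alpha>0$, and let $a_p:\mathbb R\to\mathbb R$ be a function with $|a_p(y)|\ge c|y|$ for $|y|\le1$ and some $c>0$. Let $R(x,t;y)$ be a kernel satisfying, for all $x,y\in\mathbb R$, $t\ge0$, \[ |R(x,t;y)|\le Ce^{-\eta(|x-y|+t)}+Ce^{-\eta t}\chi(x,y)\Big[1+\frac{1}{|a_p(y)|}\Big(\frac xy\Big)^{\alpha}\Big], \] where $\chi(x,y)=1$ if $-1<y<x<0$ or $0<x<y<1$ and $\chi(x,y)=0$ otherwise. Then there exists $C'>0$ such that for all $1\le p\le\infty$, $t\ge0$, \[ \Big|\int_{-\infty}^{+\infty}R(\cdot,t;y)f(y)\,dy\Big|_{L^p}\le C'e^{-\eta t}\big(|f|_{L^p}+|f|_{L^\infty}\big). \] *)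

theory Defs
  imports "HOL-Analysis.Analysis"
begin

definition chi :: "real \<Rightarrow> real \<Rightarrow> real" where
  "chi x y = (if (-1 < y \<and> y < x \<and> x < 0) \<or> (0 < x \<and> x < y \<and> y < 1) then 1 else 0)"

definition Linf_norm :: "(real \<Rightarrow> real) \<Rightarrow> ennreal" where
  "Linf_norm g = Inf {M. AE x in lborel. ennreal \<bar>g x\<bar> \<le> M}"

definition Lp_norm :: "ennreal \<Rightarrow> (real \<Rightarrow> real) \<Rightarrow> ennreal" where
  "Lp_norm p g =
     (if p = \<infinity> then Linf_norm g
      else (let r = enn2real p; I = (\<integral>\<^sup>+ x. ennreal (\<bar>g x\<bar> powr r) \<partial>lborel)
            in if I = \<infinity> then \<infinity> else ennreal ((enn2real I) powr (1 / r))))"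

end

theory Submission
  imports Defs "HOL-Real_Asymp.Real_Asymp"
begin



lemma Linf_norm_le:
  assumes "AE x in lborel. ennreal \<bar>g x\<bar> \<le> M"
  shows "Linf_norm g \<le> M"
  unfolding Linf_norm_def using assms by (intro Inf_lower) auto

lemma Linf_AE:
  assumes "Linf_norm f = ennreal l" "l \<ge> 0"
  shows "AE x in lborel. \<bar>f x\<bar> \<le> l"
proof -
  have n: "AE x in lborel. ennreal \<bar>f x\<bar> \<le> ennreal (l + 1 / Suc n)" for n
  proof -
    have "Inf {M. AE x in lborel. ennreal \<bar>f x\<bar> \<le> M} < ennreal (l + 1 / Suc n)"
      using assms unfolding Linf_norm_def by (simp add: ennreal_less_iff)
    then obtain M where "AE x in lborel. ennreal \<bar>f x\<bar> \<le> M" "M < ennreal (l + 1 / Suc n)"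
      by (auto simp: Inf_less_iff)
    then show ?thesis by (auto elim: AE_mp)
  qed
  have "AE x in lborel. \<forall>n. ennreal \<bar>f x\<bar> \<le> ennreal (l + 1 / Suc n)"
    using n by (simp add: AE_all_countable)
  then show ?thesis
  proof (rule AE_mp, intro AE_I2 impI)
    fix x assume h: "\<forall>n. ennreal \<bar>f x\<bar> \<le> ennreal (l + 1 / Suc n)"
    show "\<bar>f x\<bar> \<le> l"
    proof (rule field_le_epsilon)
      fix e :: real assume "e > 0"
      then obtain n where "1 / Suc n < e" using nat_approx_posE by blast
      moreover have "\<bar>f x\<bar> \<le> l + 1 / Suc n"
      proof -
        have "0 \<le> l + 1 / Suc n" using assms(2) by simp
        from ennreal_le_iff[OF this] h[rule_format, of n] show ?thesis by blast
      qed
      ultimately show "\<bar>f x\<bar> \<le> l + e" by linarith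
    qed
  qed
qed



lemma exp_half_int:
  assumes "\<eta> > (0::real)"
  shows "(\<integral>\<^sup>+z. ennreal (exp (- \<eta> * z)) * indicator {0..} z \<partial>lborel) = ennreal (1 / \<eta>)"
proof -
  have "(\<integral>\<^sup>+z. ennreal (exp (- \<eta> * z)) * indicator {0..} z \<partial>lborel) = ennreal (0 - (- exp (- \<eta> * 0) / \<eta>))"
  proof (rule nn_integral_FTC_atLeast)
    show "(\<lambda>z. exp (- \<eta> * z)) \<in> borel_measurable borel" by measurable
    show "\<And>z. 0 \<le> z \<Longrightarrow> ((\<lambda>z. - exp (- \<eta> * z) / \<eta>) has_real_derivative exp (- \<eta> * z)) (at z)"
      using assms by (auto intro!: derivative_eq_intros simp: field_simps)
    show "\<And>z. 0 \<le> z \<Longrightarrow> 0 \<le> exp (- \<eta> * z)" by simp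
    show "((\<lambda>z. - exp (- \<eta> * z) / \<eta>) \<longlongrightarrow> 0) at_top"
      using assms by real_asymp
  qed
  then show ?thesis by simp
qed

lemma exp_kernel:
  assumes "\<eta> > (0::real)"
  shows "(\<integral>\<^sup>+y. ennreal (exp (- \<eta> * \<bar>x - y\<bar>)) \<partial>lborel) \<le> ennreal (2 / \<eta>)"
proof -
  have "(\<integral>\<^sup>+y. ennreal (exp (- \<eta> * \<bar>x - y\<bar>)) \<partial>lborel)
      = (\<integral>\<^sup>+z. ennreal (exp (- \<eta> * \<bar>z\<bar>)) \<partial>lborel)"
    using nn_integral_real_affine[of "\<lambda>y. ennreal (exp (- \<eta> * \<bar>x - y\<bar>))" 1 x] by simp
  also have "\<dots> \<le> (\<integral>\<^sup>+z. ennreal (exp (- \<eta> * z)) * indicator {0..} z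
                   + ennreal (exp (- \<eta> * (-1 * z))) * indicator {0..} (0 + -1 * z) \<partial>lborel)"
    by (intro nn_integral_mono) (auto split: split_indicator)
  also have "\<dots> = (\<integral>\<^sup>+z. ennreal (exp (- \<eta> * z)) * indicator {0..} z \<partial>lborel)
                + (\<integral>\<^sup>+z. ennreal (exp (- \<eta> * (0 + -1 * z))) * indicator {0..} (0 + -1 * z) \<partial>lborel)"
    by (subst nn_integral_add) auto
  also have "(\<integral>\<^sup>+z. ennreal (exp (- \<eta> * (0 + -1 * z))) * indicator {0..} (0 + -1 * z) \<partial>lborel)
      = (\<integral>\<^sup>+z. ennreal (exp (- \<eta> * z)) * indicator {0..} z \<partial>lborel)"
    using nn_integral_real_affine[of "\<lambda>z. ennreal (exp (- \<eta> * z)) * indicator {0..} z" "-1" 0]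
    by simp
  also have "(\<integral>\<^sup>+z. ennreal (exp (- \<eta> * z)) * indicator {0..} z \<partial>lborel) = ennreal (1/\<eta>)"
    using exp_half_int[OF assms] .
  finally show ?thesis using assms by (simp flip: ennreal_plus)
qed



definition bnd :: "real \<Rightarrow> real \<Rightarrow> real \<Rightarrow> real \<Rightarrow> real" where
  "bnd c \<alpha> x y = (if 0 < x \<and> x < 1 then indicator {x..1} y * (1 + x powr \<alpha> / c * y powr (-1-\<alpha>))
     else if -1 < x \<and> x < 0 then indicator {-1..x} y * (1 + (-x) powr \<alpha> / c * (-y) powr (-1-\<alpha>))
     else 0)"

lemma bnd_nonneg: "c > 0 \<Longrightarrow> 0 \<le> bnd c \<alpha> x y"
  unfolding bnd_def by (auto split: split_indicator)

lemma pow_aux: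
  fixes x y c ay \<alpha> :: real
  assumes "0 < x" "0 < y" "c > 0" "ay \<ge> c * y"
  shows "1 / ay * (x / y) powr \<alpha> \<le> x powr \<alpha> / c * y powr (-1-\<alpha>)"
proof -
  have e: "y powr (-1-\<alpha>) = inverse (y * y powr \<alpha>)"
  proof -
    have "y powr (-1-\<alpha>) = y powr (-(1+\<alpha>))" by (simp add: algebra_simps)
    also have "\<dots> = inverse (y powr (1+\<alpha>))" using powr_minus[of y "1+\<alpha>"] by simp
    also have "y powr (1+\<alpha>) = y powr 1 * y powr \<alpha>" by (rule powr_add)
    finally show ?thesis using assms by simp
  qed
  have "0 < c * y" using assms by simp
  then have "0 < ay" using assms by linarith
  then have "0 < ay * (c * y)" using \<open>0 < c * y\<close> by simp
  then have "1 / ay \<le> 1 / (c * y)" using assms by (intro divide_left_mono) auto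
  then have "1 / ay * (x / y) powr \<alpha> \<le> 1 / (c * y) * (x / y) powr \<alpha>"
    by (intro mult_right_mono) auto
  also have "\<dots> = x powr \<alpha> / c * y powr (-1-\<alpha>)"
    using assms by (simp add: e powr_divide field_simps)
  finally show ?thesis .
qed

lemma chi_le:
  assumes "c > 0" "\<alpha> > 0" and a_low: "\<And>y. \<bar>y\<bar> \<le> 1 \<Longrightarrow> \<bar>a y\<bar> \<ge> c * \<bar>y\<bar>"
  shows "chi x y * (1 + (1 / \<bar>a y\<bar>) * (x / y) powr \<alpha>) \<le> bnd c \<alpha> x y"
proof (cases "(-1 < y \<and> y < x \<and> x < 0) \<or> (0 < x \<and> x < y \<and> y < 1)")
  case False
  then have "chi x y = 0" by (simp add: chi_def)
  then show ?thesis using bnd_nonneg[OF assms(1)] by simp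
next
  case True
  then show ?thesis
  proof
    assume h: "-1 < y \<and> y < x \<and> x < 0"
    have "\<bar>a y\<bar> \<ge> c * (-y)" using a_low[of y] h by auto
    from pow_aux[OF _ _ assms(1) this, of "-x" \<alpha>] h
    have "1 / \<bar>a y\<bar> * (- x / - y) powr \<alpha> \<le> (-x) powr \<alpha> / c * (-y) powr (-1-\<alpha>)" by auto
    then show ?thesis using h by (auto simp: chi_def bnd_def indicator_def)
  next
    assume h: "0 < x \<and> x < y \<and> y < 1"
    have "\<bar>a y\<bar> \<ge> c * y" using a_low[of y] h by auto
    from pow_aux[OF _ _ assms(1) this, of x \<alpha>] h
    show ?thesis using h by (auto simp: chi_def bnd_def indicator_def)
  qed
qed

lemma bnd_int:
  assumes "c > 0" "\<alpha> > 0"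
  shows "(\<integral>\<^sup>+y. ennreal (bnd c \<alpha> x y) \<partial>lborel) \<le> ennreal ((1 + 1/(c*\<alpha>)) * indicator {-1<..<1} x)"
proof -
  consider "0 < x \<and> x < 1" | "-1 < x \<and> x < 0" | "\<not> (0 < x \<and> x < 1) \<and> \<not> (-1 < x \<and> x < 0)" by blast
  then show ?thesis
  proof cases
    case 1
    let ?f = "\<lambda>y. 1 + x powr \<alpha> / c * y powr (-1-\<alpha>)"
    let ?F = "\<lambda>y. y - x powr \<alpha> / (c * \<alpha>) * y powr (-\<alpha>)"
    have "(\<integral>\<^sup>+y. ennreal (bnd c \<alpha> x y) \<partial>lborel) = (\<integral>\<^sup>+y. ennreal (?f y) * indicator {x..1} y \<partial>lborel)"
      using 1 by (intro nn_integral_cong) (auto simp: bnd_def split: split_indicator)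
    also have "\<dots> = ennreal (?F 1 - ?F x)"
    proof (rule nn_integral_FTC_Icc)
      show "?f \<in> borel_measurable borel" by measurable
      fix y assume y: "y \<in> {x..1}"
      then have "y > 0" using 1 by auto
      have eqa: "-\<alpha>-1 = -1-\<alpha>" by simp
      show "(?F has_real_derivative ?f y) (at y)"
        using \<open>y > 0\<close> assms
        by (auto intro!: derivative_eq_intros simp: field_simps eqa)
      show "0 \<le> ?f y" using assms by auto
    qed (use 1 in auto)
    also have "?F 1 - ?F x = 1 - x + 1 / (c * \<alpha>) - x powr \<alpha> / (c * \<alpha>)"
    proof -
      have "x powr \<alpha> * x powr (-\<alpha>) = 1" using 1 by (simp add: powr_add[symmetric])
      then show ?thesis by (simp add: field_simps)
    qed
    also have "\<dots> \<le> (1 + 1/(c*\<alpha>)) * indicator {-1<..<1} x"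
    proof -
      have "0 \<le> x powr \<alpha> / (c * \<alpha>)" using assms by simp
      then show ?thesis using 1 by auto
    qed
    finally show ?thesis by (simp add: ennreal_leI)
  next
    case 2
    let ?f = "\<lambda>y. 1 + (-x) powr \<alpha> / c * (-y) powr (-1-\<alpha>)"
    let ?F = "\<lambda>y. y + (-x) powr \<alpha> / (c * \<alpha>) * (-y) powr (-\<alpha>)"
    have "(\<integral>\<^sup>+y. ennreal (bnd c \<alpha> x y) \<partial>lborel) = (\<integral>\<^sup>+y. ennreal (?f y) * indicator {-1..x} y \<partial>lborel)"
      using 2 by (intro nn_integral_cong) (auto simp: bnd_def split: split_indicator)
    also have "\<dots> = ennreal (?F x - ?F (-1))"
    proof (rule nn_integral_FTC_Icc)
      show "?f \<in> borel_measurable borel" by measurable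
      fix y assume y: "y \<in> {-1..x}"
      then have "y < 0" using 2 by auto
      have eqa: "-\<alpha>-1 = -1-\<alpha>" by simp
      show "(?F has_real_derivative ?f y) (at y)"
        using \<open>y < 0\<close> assms
        by (auto intro!: derivative_eq_intros simp: field_simps eqa)
      show "0 \<le> ?f y" using assms by auto
    qed (use 2 in auto)
    also have "?F x - ?F (-1) = x + 1 + 1 / (c * \<alpha>) - (-x) powr \<alpha> / (c * \<alpha>)"
    proof -
      have "(-x) powr \<alpha> * (-x) powr (-\<alpha>) = 1" using 2 by (simp add: powr_add[symmetric])
      then show ?thesis by (simp add: field_simps)
    qed
    also have "\<dots> \<le> (1 + 1/(c*\<alpha>)) * indicator {-1<..<1} x"
    proof -
      have "0 \<le> (-x) powr \<alpha> / (c * \<alpha>)" using assms by simp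
      then show ?thesis using 2 by auto
    qed
    finally show ?thesis by (simp add: ennreal_leI)
  next
    case 3
    have "bnd c \<alpha> x y = 0" for y using 3 by (auto simp add: bnd_def)
    then show ?thesis by simp
  qed
qed



lemma sum_powr:
  fixes u v r :: real
  assumes "u \<ge> 0" "v \<ge> 0" "r > 0"
  shows "(u + v) powr r \<le> 2 powr r * (u powr r + v powr r)"
proof -
  have "(u + v) powr r \<le> (2 * max u v) powr r"
    using assms by (intro powr_mono2) auto
  also have "\<dots> = 2 powr r * max u v powr r"
    using assms by (simp add: powr_mult)
  also have "max u v powr r \<le> u powr r + v powr r"
    by (cases "u \<le> v") (auto simp: max_def)
  then have "2 powr r * max u v powr r \<le> 2 powr r * (u powr r + v powr r)"
    by (intro mult_left_mono) auto
  finally show ?thesis .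
qed

lemma young_tangent:
  fixes s L r :: real
  assumes "s \<ge> 0" "L > 0" "r \<ge> 1"
  shows "s * L powr (1/r) \<le> L / r * s powr r + (r - 1) / r"
proof (cases "s = 0")
  case True then show ?thesis using assms by simp
next
  case False
  then have s: "s > 0" using assms by simp
  have "(L * s powr r) powr (1/r) * 1 powr (1 - 1/r) \<le> (1/r) * (L * s powr r) + (1 - 1/r) * 1"
    using assms s by (intro Youngs_inequality_0) (auto simp: field_simps)
  moreover have "(L * s powr r) powr (1/r) = L powr (1/r) * s"
    using assms s by (simp add: powr_mult powr_powr)
  ultimately show ?thesis using assms by (simp add: field_simps)
qed

lemma jensen:
  fixes k f :: "real \<Rightarrow> real" and r K A h :: real
  assumes r: "r \<ge> 1" and [measurable]: "k \<in> borel_measurable borel" "f \<in> borel_measurable borel"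
    and k0: "\<And>y. 0 \<le> k y" and kK: "(\<integral>\<^sup>+y. ennreal (k y) \<partial>lborel) \<le> ennreal K" and K: "K > 0"
    and A: "(\<integral>\<^sup>+y. ennreal (k y * \<bar>f y\<bar> powr r) \<partial>lborel) = ennreal A" "A \<ge> 0"
    and h: "(\<integral>\<^sup>+y. ennreal (k y * \<bar>f y\<bar>) \<partial>lborel) = ennreal h" "h \<ge> 0"
  shows "h powr r \<le> K powr (r - 1) * A"
proof (cases "A = 0")
  case True
  then have "AE y in lborel. ennreal (k y * \<bar>f y\<bar> powr r) = 0"
    using A by (subst nn_integral_0_iff_AE[symmetric]) auto
  then have "AE y in lborel. ennreal (k y * \<bar>f y\<bar>) = 0"
  proof (rule AE_mp, intro AE_I2 impI)
    fix y assume "ennreal (k y * \<bar>f y\<bar> powr r) = 0"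
    then have "k y * \<bar>f y\<bar> powr r = 0" using k0[of y] by simp
    then show "ennreal (k y * \<bar>f y\<bar>) = 0" by auto
  qed
  then have "(\<integral>\<^sup>+y. ennreal (k y * \<bar>f y\<bar>) \<partial>lborel) = 0"
    by (subst nn_integral_0_iff_AE) auto
  then have "h = 0" using h by simp
  then show ?thesis using True r by simp
next
  case False
  then have Ap: "A > 0" using A by simp
  define L where "L = K / A"
  have Lp: "L > 0" using Ap K by (simp add: L_def)
  have "ennreal (h * L powr (1/r)) = (\<integral>\<^sup>+y. ennreal (k y * \<bar>f y\<bar>) \<partial>lborel) * ennreal (L powr (1/r))"
    using h by (simp add: ennreal_mult)
  also have "\<dots> = (\<integral>\<^sup>+y. ennreal (k y * \<bar>f y\<bar>) * ennreal (L powr (1/r)) \<partial>lborel)"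
    by (rule nn_integral_multc[symmetric]) measurable
  also have "\<dots> \<le> (\<integral>\<^sup>+y. ennreal (L / r) * ennreal (k y * \<bar>f y\<bar> powr r) + ennreal ((r - 1) / r) * ennreal (k y) \<partial>lborel)"
  proof (intro nn_integral_mono)
    fix y
    have "\<bar>f y\<bar> * L powr (1/r) \<le> L / r * \<bar>f y\<bar> powr r + (r - 1) / r"
      using young_tangent[of "\<bar>f y\<bar>" L r] Lp r by simp
    then have "k y * (\<bar>f y\<bar> * L powr (1/r)) \<le> k y * (L / r * \<bar>f y\<bar> powr r + (r - 1) / r)"
      using k0[of y] by (intro mult_left_mono) auto
    then have "k y * \<bar>f y\<bar> * L powr (1/r) \<le> L / r * (k y * \<bar>f y\<bar> powr r) + (r - 1) / r * k y"
      by (simp add: algebra_simps)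
    moreover have "0 \<le> L / r * (k y * \<bar>f y\<bar> powr r)" "0 \<le> (r - 1) / r * k y"
      using Lp r k0[of y] by auto
    ultimately show "ennreal (k y * \<bar>f y\<bar>) * ennreal (L powr (1/r))
        \<le> ennreal (L / r) * ennreal (k y * \<bar>f y\<bar> powr r) + ennreal ((r - 1) / r) * ennreal (k y)"
      using Lp r k0[of y]
      by (simp add: ennreal_mult[symmetric] ennreal_plus[symmetric] ennreal_leI del: ennreal_plus)
  qed
  also have "\<dots> = ennreal (L / r) * ennreal A + ennreal ((r - 1) / r) * (\<integral>\<^sup>+y. ennreal (k y) \<partial>lborel)"
    by (subst nn_integral_add) (auto simp: nn_integral_cmult A)
  also have "\<dots> \<le> ennreal (L / r) * ennreal A + ennreal ((r - 1) / r) * ennreal K"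
    by (intro add_mono mult_left_mono kK) auto
  also have "\<dots> = ennreal (L / r * A + (r - 1) / r * K)"
    using Lp r Ap K by (simp add: ennreal_mult[symmetric] ennreal_plus[symmetric] del: ennreal_plus)
  also have "L / r * A + (r - 1) / r * K = K"
    using Ap r by (simp add: L_def field_simps)
  finally have "h * L powr (1/r) \<le> K"
    using K by (simp add: ennreal_le_iff)
  then have hle: "h \<le> K / L powr (1/r)"
    using Lp by (simp add: field_simps)
  have "h powr r \<le> (K / L powr (1/r)) powr r"
    using hle h r by (intro powr_mono2) auto
  also have "\<dots> = K powr r / L"
    using Lp K r by (simp add: powr_divide powr_powr)
  also have "\<dots> = K powr (r - 1) * A"
    using Ap K by (simp add: L_def powr_diff field_simps)
  finally show ?thesis .
qed




lemma final_ineq: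
  fixes r E C K B0 F m :: real
  assumes r: "r \<ge> 1" and pos: "E > 0" "C > 0" "K > 0" "B0 > 0" "F \<ge> 0" "m \<ge> 0"
  shows "(2 powr r * ((E*C) powr r * K powr (r-1)) * K * F + 2 powr r * (E*C*m*B0) powr r * 2) powr (1/r)
         \<le> 4*C*(K+2*B0) * E * (F powr (1/r) + m)"
proof -
  define X where "X = (E*C*K) powr r * F"
  define Y where "Y = 2 * (E*C*m*B0) powr r"
  have X0: "X \<ge> 0" and Y0: "Y \<ge> 0" using pos by (auto simp: X_def Y_def)
  have KK: "K powr (r-1) * K = K powr r"
    using pos powr_add[of K "r-1" 1] by simp
  have "2 powr r * ((E*C) powr r * K powr (r-1)) * K * F + 2 powr r * (E*C*m*B0) powr r * 2
        = 2 powr r * (X + Y)"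
    using pos by (simp add: X_def Y_def powr_mult algebra_simps flip: KK)
  then have "(2 powr r * ((E*C) powr r * K powr (r-1)) * K * F + 2 powr r * (E*C*m*B0) powr r * 2) powr (1/r)
        = 2 * (X + Y) powr (1/r)"
    using r X0 Y0 by (simp add: powr_mult powr_powr)
  also have "(X + Y) powr (1/r) \<le> 2 powr (1/r) * (X powr (1/r) + Y powr (1/r))"
    using X0 Y0 r by (intro sum_powr) auto
  also have "X powr (1/r) = E*C*K * F powr (1/r)"
    using pos r by (simp add: X_def powr_mult powr_powr)
  also have "Y powr (1/r) = 2 powr (1/r) * (E*C*m*B0)"
    using pos r by (simp add: Y_def powr_mult powr_powr)
  also have t2: "2 powr (1/r) \<le> (2::real)"
    using powr_mono[of "1/r" 1 2] r by simp
  have "2 powr (1/r) * (E*C*K * F powr (1/r) + 2 powr (1/r) * (E*C*m*B0))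
        \<le> 2 * (E*C*K * F powr (1/r) + 2 * (E*C*m*B0))"
    using t2 pos by (intro mult_mono add_mono mult_right_mono) auto
  then have "2 * (2 powr (1/r) * (E*C*K * F powr (1/r) + 2 powr (1/r) * (E*C*m*B0)))
        \<le> 2 * (2 * (E*C*K * F powr (1/r) + 2 * (E*C*m*B0)))" by simp
  also have "\<dots> \<le> 4*C*(K+2*B0) * E * (F powr (1/r) + m)"
  proof -
    have "4*C*(K+2*B0) * E * (F powr (1/r) + m) - 2 * (2 * (E*C*K * F powr (1/r) + 2 * (E*C*m*B0)))
          = 4*C*E*(K*m + 2*B0*F powr (1/r))"
      by (simp add: algebra_simps)
    also have "\<dots> \<ge> 0" using pos by simp
    finally show ?thesis by simp
  qed
  finally show ?thesis by simp
qed



theorem lemma4p4: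
  fixes \<eta> C \<alpha> c :: real
    and a :: "real \<Rightarrow> real"
    and R :: "real \<Rightarrow> real \<Rightarrow> real \<Rightarrow> real"
  assumes "\<eta> > 0" "C > 0" "\<alpha> > 0" "c > 0"
    and a_low: "\<And>y. \<bar>y\<bar> \<le> 1 \<Longrightarrow> \<bar>a y\<bar> \<ge> c * \<bar>y\<bar>"
    and R_meas: "\<And>t. t \<ge> 0 \<Longrightarrow> (\<lambda>(x, y). R x t y) \<in> borel_measurable (lborel \<Otimes>\<^sub>M lborel)"
    and R_bound: "\<And>x t y. t \<ge> 0 \<Longrightarrow>
        \<bar>R x t y\<bar> \<le> C * exp (- \<eta> * (\<bar>x - y\<bar> + t))
                   + C * exp (- \<eta> * t) * chi x y * (1 + (1 / \<bar>a y\<bar>) * (x / y) powr \<alpha>)"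
  shows "\<exists>C'>0. \<forall>p::ennreal. p \<ge> 1 \<longrightarrow> (\<forall>t\<ge>0. \<forall>f \<in> borel_measurable lborel.
           Lp_norm p (\<lambda>x. \<integral>y. R x t y * f y \<partial>lborel)
             \<le> ennreal (C' * exp (- \<eta> * t)) * (Lp_norm p f + Linf_norm f))"
proof -
  note pos = assms(1-4)
  define K where "K = 2 / \<eta>"
  define B0 where "B0 = 1 + 1 / (c * \<alpha>)"
  define C' where "C' = 4 * C * (K + 2 * B0)"
  have Kp: "K > 0" using pos by (simp add: K_def)
  have B0p: "B0 > 0"
  proof -
    have "0 < 1 / (c * \<alpha>)" using pos by simp
    then show ?thesis unfolding B0_def by linarith
  qed
  have C'p: "C' > 0" using pos Kp B0p by (simp add: C'_def)
  have main: "Lp_norm p (\<lambda>x. \<integral>y. R x t y * f y \<partial>lborel)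
             \<le> ennreal (C' * exp (- \<eta> * t)) * (Lp_norm p f + Linf_norm f)"
    if p1: "p \<ge> 1" and t: "t \<ge> 0" and fm0: "f \<in> borel_measurable lborel" for p t f
  proof -
    have fm[measurable]: "f \<in> borel_measurable borel" using fm0 by simp
    define E where "E = exp (- \<eta> * t)"
    have Ep: "E > 0" by (simp add: E_def)
    define g where "g = (\<lambda>x. \<integral>y. R x t y * f y \<partial>lborel)"
    show ?thesis
    proof (cases "Linf_norm f = top \<or> Lp_norm p f = top")
      case True
      then have "ennreal (C' * exp (- \<eta> * t)) * (Lp_norm p f + Linf_norm f) = top"
        using C'p by (auto simp: ennreal_mult_top)
      then show ?thesis by simp
    next
      case False
      then obtain m where m: "Linf_norm f = ennreal m" "m \<ge> 0"
        by (cases "Linf_norm f") auto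
      have fbd: "AE y in lborel. \<bar>f y\<bar> \<le> m" using Linf_AE[OF m] .
      define H where "H = (\<lambda>x. \<integral>\<^sup>+y. ennreal (exp (- \<eta> * \<bar>x - y\<bar>) * \<bar>f y\<bar>) \<partial>lborel)"
      have Hbd: "H x \<le> ennreal (m * K)" for x
      proof -
        have "H x \<le> (\<integral>\<^sup>+y. ennreal (exp (- \<eta> * \<bar>x - y\<bar>)) * ennreal m \<partial>lborel)"
          unfolding H_def
        proof (intro nn_integral_mono_AE, use fbd in \<open>elim AE_mp, intro AE_I2 impI\<close>)
          fix y assume "\<bar>f y\<bar> \<le> m"
          then have "exp (- \<eta> * \<bar>x - y\<bar>) * \<bar>f y\<bar> \<le> exp (- \<eta> * \<bar>x - y\<bar>) * m"
            by (intro mult_left_mono) auto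
          then show "ennreal (exp (- \<eta> * \<bar>x - y\<bar>) * \<bar>f y\<bar>) \<le> ennreal (exp (- \<eta> * \<bar>x - y\<bar>)) * ennreal m"
            using m by (simp add: ennreal_mult[symmetric] ennreal_leI)
        qed
        also have "\<dots> = (\<integral>\<^sup>+y. ennreal (exp (- \<eta> * \<bar>x - y\<bar>)) \<partial>lborel) * ennreal m"
          by (rule nn_integral_multc) measurable
        also have "\<dots> \<le> ennreal K * ennreal m"
          using exp_kernel[OF pos(1), of x] by (intro mult_right_mono) (auto simp: K_def)
        finally show ?thesis using m Kp by (simp add: ennreal_mult[symmetric] mult.commute)
      qed
      define hr where "hr = (\<lambda>x. enn2real (H x))"
      have Hhr: "H x = ennreal (hr x)" for x
        using Hbd[of x] unfolding hr_def by (cases "H x") (auto simp: top_unique)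
      have hr0: "hr x \<ge> 0" for x by (simp add: hr_def)
      have hrbd: "hr x \<le> m * K" for x
        using Hbd[of x] m Kp by (simp add: Hhr ennreal_le_iff)
      define ind where "ind = (\<lambda>x. indicator {-1<..<1::real} x :: real)"
      have ind01: "ind x \<ge> 0" "ind x \<le> 1" for x by (auto simp: ind_def indicator_def)
      have P: "\<bar>g x\<bar> \<le> E * C * hr x + E * C * m * (B0 * ind x)" for x
      proof -
        have bndm[measurable]: "(\<lambda>y. bnd c \<alpha> x y) \<in> borel_measurable borel"
          unfolding bnd_def by measurable
        have "ennreal \<bar>g x\<bar> \<le> (\<integral>\<^sup>+y. ennreal \<bar>R x t y * f y\<bar> \<partial>lborel)"
        proof (cases "integrable lborel (\<lambda>y. R x t y * f y)")
          case True
          then show ?thesis unfolding g_def using integral_norm_bound_ennreal[OF True] by simp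
        next
          case False
          then show ?thesis unfolding g_def by (simp add: not_integrable_integral_eq)
        qed
        also have "\<dots> \<le> (\<integral>\<^sup>+y. ennreal (E * C) * ennreal (exp (- \<eta> * \<bar>x - y\<bar>) * \<bar>f y\<bar>)
                         + ennreal (E * C * m) * ennreal (bnd c \<alpha> x y) \<partial>lborel)"
        proof (intro nn_integral_mono_AE, use fbd in \<open>elim AE_mp, intro AE_I2 impI\<close>)
          fix y assume fy: "\<bar>f y\<bar> \<le> m"
          have ex: "exp (- \<eta> * (\<bar>x - y\<bar> + t)) = exp (- \<eta> * \<bar>x - y\<bar>) * E"
            by (simp add: E_def algebra_simps flip: exp_add)
          let ?Q = "chi x y * (1 + (1 / \<bar>a y\<bar>) * (x / y) powr \<alpha>)"
          have Q0: "0 \<le> ?Q" by (simp add: chi_def)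
          have Qb: "?Q \<le> bnd c \<alpha> x y" using chi_le[OF pos(4,3) a_low] .
          have "\<bar>R x t y * f y\<bar> = \<bar>R x t y\<bar> * \<bar>f y\<bar>" by (simp add: abs_mult)
          also have "\<dots> \<le> (C * exp (- \<eta> * (\<bar>x - y\<bar> + t)) + C * E * ?Q) * \<bar>f y\<bar>"
            using R_bound[OF t, of x y] by (intro mult_right_mono) (auto simp: E_def mult.assoc)
          also have "\<dots> = E * C * (exp (- \<eta> * \<bar>x - y\<bar>) * \<bar>f y\<bar>) + E * C * (?Q * \<bar>f y\<bar>)"
            unfolding ex by (simp add: algebra_simps)
          also have "?Q * \<bar>f y\<bar> \<le> bnd c \<alpha> x y * m"
            using Q0 Qb fy by (intro mult_mono) (auto intro: order_trans)
          then have "E * C * (?Q * \<bar>f y\<bar>) \<le> E * C * m * bnd c \<alpha> x y"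
            using Ep pos by (simp add: mult.commute mult.left_commute)
          finally have "\<bar>R x t y * f y\<bar> \<le> E * C * (exp (- \<eta> * \<bar>x - y\<bar>) * \<bar>f y\<bar>) + E * C * m * bnd c \<alpha> x y"
            by simp
          then show "ennreal \<bar>R x t y * f y\<bar> \<le> ennreal (E * C) * ennreal (exp (- \<eta> * \<bar>x - y\<bar>) * \<bar>f y\<bar>)
                         + ennreal (E * C * m) * ennreal (bnd c \<alpha> x y)"
            using Ep pos m bnd_nonneg[OF pos(4), of \<alpha> x y]
            by (simp add: ennreal_mult[symmetric] ennreal_plus[symmetric] ennreal_leI del: ennreal_plus)
        qed
        also have "\<dots> = ennreal (E * C) * H x + ennreal (E * C * m) * (\<integral>\<^sup>+y. ennreal (bnd c \<alpha> x y) \<partial>lborel)"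
          unfolding H_def by (subst nn_integral_add) (auto simp: nn_integral_cmult)
        also have "\<dots> \<le> ennreal (E * C) * ennreal (hr x) + ennreal (E * C * m) * ennreal (B0 * ind x)"
          using bnd_int[OF pos(4,3), of x] by (intro add_mono mult_left_mono) (auto simp: Hhr B0_def ind_def)
        also have "\<dots> = ennreal (E * C * hr x + E * C * m * (B0 * ind x))"
          using Ep pos m hr0[of x] B0p ind01[of x]
          by (simp add: ennreal_mult[symmetric] ennreal_plus[symmetric] del: ennreal_plus)
        finally have X: "ennreal \<bar>g x\<bar> \<le> ennreal (E * C * hr x + E * C * m * (B0 * ind x))" .
        have "0 \<le> E * C * hr x + E * C * m * (B0 * ind x)"
          using Ep pos m hr0[of x] B0p ind01[of x] by simp
        from ennreal_le_iff[OF this] X show ?thesis by blast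
      qed
      note nf = False
      show ?thesis
      proof (cases "p = top")
        case True
        have "Linf_norm g \<le> ennreal (E * C * m * K + E * C * m * B0)"
        proof (rule Linf_norm_le, intro AE_I2)
          fix x
          have "\<bar>g x\<bar> \<le> E * C * hr x + E * C * m * (B0 * ind x)" by (rule P)
          also have "\<dots> \<le> E * C * (m * K) + E * C * m * (B0 * 1)"
            using Ep pos m hrbd[of x] B0p ind01[of x] by (intro add_mono mult_left_mono) auto
          finally show "ennreal \<bar>g x\<bar> \<le> ennreal (E * C * m * K + E * C * m * B0)"
            by (intro ennreal_leI) (simp add: algebra_simps)
        qed
        also have "\<dots> \<le> ennreal (C' * E * (m + m))"
        proof (intro ennreal_leI)
          have "C * (K + B0) \<le> C' * 2"
            using pos Kp B0p by (simp add: C'_def algebra_simps)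
          then have "(E * m) * (C * (K + B0)) \<le> (E * m) * (C' * 2)"
            using Ep m by (intro mult_left_mono) auto
          then show "E * C * m * K + E * C * m * B0 \<le> C' * E * (m + m)"
            by (simp add: algebra_simps)
        qed
        also have "\<dots> = ennreal (C' * exp (- \<eta> * t)) * (Lp_norm p f + Linf_norm f)"
          using True m C'p Ep
          by (simp add: Lp_norm_def E_def ennreal_mult[symmetric] ennreal_plus[symmetric] del: ennreal_plus)
        finally show ?thesis using True by (simp add: Lp_norm_def g_def)
      next
        case False
        obtain r where r: "p = ennreal r" "r \<ge> 0" using False by (cases p) auto
        have r1: "r \<ge> 1" using p1 r by (metis ennreal_1 ennreal_le_iff)
        have Lpf: "Lp_norm p h = (if (\<integral>\<^sup>+x. ennreal (\<bar>h x\<bar> powr r) \<partial>lborel) = top then top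
                     else ennreal (enn2real (\<integral>\<^sup>+x. ennreal (\<bar>h x\<bar> powr r) \<partial>lborel) powr (1/r)))" for h
          using False r by (simp add: Lp_norm_def Let_def)
        define FI where "FI = (\<integral>\<^sup>+x. ennreal (\<bar>f x\<bar> powr r) \<partial>lborel)"
        have FIt: "FI \<noteq> top" using nf Lpf[of f] by (auto simp: FI_def split: if_splits)
        define F where "F = enn2real FI"
        have FIF: "FI = ennreal F" and F0: "F \<ge> 0" using FIt by (cases FI, auto simp: F_def)+
        have Lpf_eq: "Lp_norm p f = ennreal (F powr (1/r))"
          using Lpf[of f] FIt by (simp add: FI_def[symmetric] F_def)
        define Ax where "Ax = (\<lambda>x. \<integral>\<^sup>+y. ennreal (exp (- \<eta> * \<bar>x - y\<bar>) * \<bar>f y\<bar> powr r) \<partial>lborel)"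
        have Axm: "Ax \<in> borel_measurable lborel" unfolding Ax_def by measurable
        have AxF: "Ax x \<le> FI" for x
          unfolding Ax_def FI_def
          using pos by (intro nn_integral_mono ennreal_leI mult_left_le_one_le) auto
        define Ar where "Ar = (\<lambda>x. enn2real (Ax x))"
        have AxAr: "Ax x = ennreal (Ar x)" for x
          using AxF[of x] FIt unfolding Ar_def by (cases "Ax x") (auto simp: top_unique)
        have Ar0: "Ar x \<ge> 0" for x by (simp add: Ar_def)
        have J: "hr x powr r \<le> K powr (r - 1) * Ar x" for x
        proof (rule jensen[OF r1, of "\<lambda>y. exp (- \<eta> * \<bar>x - y\<bar>)" f])
          show "(\<integral>\<^sup>+y. ennreal (exp (- \<eta> * \<bar>x - y\<bar>)) \<partial>lborel) \<le> ennreal K"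
            using exp_kernel[OF pos(1)] by (simp add: K_def)
          show "(\<integral>\<^sup>+y. ennreal (exp (- \<eta> * \<bar>x - y\<bar>) * \<bar>f y\<bar> powr r) \<partial>lborel) = ennreal (Ar x)"
            using AxAr[of x] by (simp add: Ax_def)
          show "(\<integral>\<^sup>+y. ennreal (exp (- \<eta> * \<bar>x - y\<bar>) * \<bar>f y\<bar>) \<partial>lborel) = ennreal (hr x)"
            using Hhr[of x] by (simp add: H_def)
        qed (use Kp Ar0 hr0 in auto)
        define c1 where "c1 = 2 powr r * ((E*C) powr r * K powr (r-1))"
        define c2 where "c2 = 2 powr r * (E*C*m*B0) powr r"
        have c10: "c1 \<ge> 0" and c20: "c2 \<ge> 0" by (auto simp: c1_def c2_def)
        have Gx: "\<bar>g x\<bar> powr r \<le> c1 * Ar x + c2 * ind x" for x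
        proof -
          let ?u = "E * C * hr x" and ?v = "E * C * m * (B0 * ind x)"
          have u0: "?u \<ge> 0" and v0: "?v \<ge> 0" using Ep pos hr0[of x] m B0p ind01[of x] by auto
          have "\<bar>g x\<bar> powr r \<le> (?u + ?v) powr r"
            using P[of x] r1 by (intro powr_mono2) auto
          also have "\<dots> \<le> 2 powr r * (?u powr r + ?v powr r)"
            using u0 v0 r1 by (intro sum_powr) auto
          also have "?u powr r = (E*C) powr r * hr x powr r"
            using Ep pos hr0[of x] by (simp add: powr_mult)
          also have "?v powr r = (E*C*m*B0) powr r * ind x"
            using r1 by (cases "x \<in> {-1<..<1}") (auto simp: ind_def mult.assoc)
          finally have "\<bar>g x\<bar> powr r \<le> 2 powr r * ((E*C) powr r * hr x powr r + (E*C*m*B0) powr r * ind x)" .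
          also have "\<dots> \<le> 2 powr r * ((E*C) powr r * (K powr (r - 1) * Ar x) + (E*C*m*B0) powr r * ind x)"
            using J[of x] by (intro mult_left_mono add_mono) auto
          also have "\<dots> = c1 * Ar x + c2 * ind x"
            by (simp add: c1_def c2_def algebra_simps)
          finally show ?thesis .
        qed
        have intA: "(\<integral>\<^sup>+x. Ax x \<partial>lborel) \<le> ennreal K * FI"
        proof -
          have meas: "(\<lambda>(x, y). ennreal (exp (- \<eta> * \<bar>x - y\<bar>) * \<bar>f y\<bar> powr r)) \<in> borel_measurable (lborel \<Otimes>\<^sub>M lborel)"
            by measurable
          have "(\<integral>\<^sup>+x. Ax x \<partial>lborel) = (\<integral>\<^sup>+y. \<integral>\<^sup>+x. ennreal (exp (- \<eta> * \<bar>x - y\<bar>) * \<bar>f y\<bar> powr r) \<partial>lborel \<partial>lborel)"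
            unfolding Ax_def using lborel_pair.Fubini'[OF meas] by simp
          also have "\<dots> = (\<integral>\<^sup>+y. (\<integral>\<^sup>+x. ennreal (exp (- \<eta> * \<bar>y - x\<bar>)) \<partial>lborel) * ennreal (\<bar>f y\<bar> powr r) \<partial>lborel)"
          proof (intro nn_integral_cong)
            fix y
            show "(\<integral>\<^sup>+x. ennreal (exp (- \<eta> * \<bar>x - y\<bar>) * \<bar>f y\<bar> powr r) \<partial>lborel)
                 = (\<integral>\<^sup>+x. ennreal (exp (- \<eta> * \<bar>y - x\<bar>)) \<partial>lborel) * ennreal (\<bar>f y\<bar> powr r)"
              by (subst nn_integral_multc[symmetric]) (auto simp: abs_minus_commute ennreal_mult[symmetric])
          qed
          also have "\<dots> \<le> (\<integral>\<^sup>+y. ennreal K * ennreal (\<bar>f y\<bar> powr r) \<partial>lborel)"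
            using exp_kernel[OF pos(1)] by (intro nn_integral_mono mult_right_mono) (auto simp: K_def)
          also have "\<dots> = ennreal K * FI"
            unfolding FI_def by (rule nn_integral_cmult) measurable
          finally show ?thesis .
        qed
        define GI where "GI = (\<integral>\<^sup>+x. ennreal (\<bar>g x\<bar> powr r) \<partial>lborel)"
        define T where "T = c1 * K * F + c2 * 2"
        have T0: "T \<ge> 0" using c10 c20 Kp F0 by (simp add: T_def)
        have "GI \<le> (\<integral>\<^sup>+x. ennreal c1 * Ax x + ennreal c2 * indicator {-1<..<1} x \<partial>lborel)"
          unfolding GI_def
        proof (intro nn_integral_mono)
          fix x
          have "ennreal (\<bar>g x\<bar> powr r) \<le> ennreal (c1 * Ar x + c2 * ind x)"
            using Gx[of x] by (rule ennreal_leI)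
          also have "\<dots> = ennreal c1 * Ax x + ennreal c2 * indicator {-1<..<1} x"
            using c10 c20 Ar0[of x] ind01[of x]
            by (simp add: AxAr ind_def ennreal_mult ennreal_plus ennreal_indicator)
          finally show "ennreal (\<bar>g x\<bar> powr r) \<le> ennreal c1 * Ax x + ennreal c2 * indicator {-1<..<1} x" .
        qed
        also have "\<dots> = ennreal c1 * (\<integral>\<^sup>+x. Ax x \<partial>lborel) + ennreal c2 * 2"
          using Axm by (subst nn_integral_add) (auto simp: nn_integral_cmult)
        also have "\<dots> \<le> ennreal c1 * (ennreal K * ennreal F) + ennreal c2 * 2"
          using intA FIF by (intro add_mono mult_left_mono) auto
        also have "\<dots> = ennreal T"
        proof -
          have e1: "ennreal c1 * (ennreal K * ennreal F) = ennreal (c1 * K * F)"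
            using c10 Kp F0 by (simp add: ennreal_mult mult.assoc)
          have e2: "ennreal c2 * 2 = ennreal (c2 * 2)"
            using c20 by (simp add: ennreal_mult)
          show ?thesis unfolding e1 e2 T_def
            using c10 c20 Kp F0 by (simp add: ennreal_plus)
        qed
        finally have GIT: "GI \<le> ennreal T" .
        then have GIt: "GI \<noteq> top" by (auto simp: top_unique)
        have eGI: "enn2real GI \<le> T"
          using GIT GIt T0 by (cases GI) (auto simp: ennreal_le_iff)
        have "Lp_norm p g = ennreal (enn2real GI powr (1/r))"
          using Lpf[of g] GIt by (simp add: GI_def[symmetric])
        also have "\<dots> \<le> ennreal (T powr (1/r))"
          using eGI r1 by (intro ennreal_leI powr_mono2) auto
        finally have L1: "Lp_norm p g \<le> ennreal (T powr (1/r))" .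
        have L2: "T powr (1/r) \<le> C' * E * (F powr (1/r) + m)"
          unfolding T_def c1_def c2_def C'_def
          using final_ineq[OF r1 Ep pos(2) Kp B0p F0 m(2)] by (simp add: mult.assoc)
        have L3: "ennreal (C' * E * (F powr (1/r) + m)) = ennreal (C' * exp (- \<eta> * t)) * (Lp_norm p f + Linf_norm f)"
          using C'p Ep m by (simp add: Lpf_eq E_def ennreal_mult[symmetric] ennreal_plus[symmetric] del: ennreal_plus)
        have "Lp_norm p g \<le> ennreal (C' * E * (F powr (1/r) + m))"
          using L1 ennreal_leI[OF L2] by (rule order_trans)
        then show ?thesis unfolding L3 by (simp add: g_def)
      qed
    qed
  qed
  show ?thesis
    using C'p main unfolding Ball_def by blast
qed

end
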